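(* Let $(p_{n,m})_{n,m\in\omega}$ be a matrix of terms such that: (1) each $p_{n,m}$ depends only on variables $x_{i,j}$ with $i<n$; (2) for every $n$ there are infinitely many $m$ with $p_{n,m}=^*0$ (the constant term); (3) for all $i,j$ there are infinitely many $n$ such that for every $M\in\omega$ there are $m_0,\dots,m_k>M$ such that $x_{i,j}$ is determined by $p_{n,m_0},\dots,p_{n,m_k}$. Then there is $q\in R_{\omega\cdot\omega+\omega}$ with $\sigma(q)=\bar p$, i.e. $q_{n,m}=p_{n,m}$ for all $n,m\in\omega$.
   Context: Throughout, $\delta$ denotes a nonzero countable limit ordinal. Terms: variables are $x_{l,k}$ ($l,k\in\omega$), each taking values in $\{0,1\}$. A term $t$ is given by a finite sequence of variables $(v_0,\dots,v_{r-1})$ and a function $F:2^r\to2$; a variable $v$ is identified with the term $((v),\mathrm{id})$. An assignment $a$ maps variables to $\{0,1\}$ and extends to terms by $t\circ a=F(v_0\circ a,\dots,v_{r-1}\circ a)$. Terms are identified modulo $t=^*s$ iff $t\circ a=s\circ a$ for all assignments $a$. A term depends only on variables in $Y$ if it is $=^*$ to a term using only variables from $Y$. A term or variable $s$ is determined by terms $t_0,\dots,t_n$ if for all assignments $a,b$, $(t_i\circ a)_{i\le n}=(t_i\circ b)_{i\le n}$ implies $s\circ a=s\circ b$. The forcing $\tilde P$: a condition $\tilde p$ has height $\mathrm{ht}(\tilde p)<\omega_1$ and consists of, for every limit $\delta<\mathrm{ht}(\tilde p)$ and $n,m,k\in\omega$: a cofinal $\nu_{\delta,n,m}\subseteq\delta$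 of order type $\omega$, with $\nu_{\delta,n,m_1}\cap\nu_{\delta,n,m_2}=\emptyset$ for $m_1\ne m_2$; a strictly increasing $j_{\delta,n,m}:\omega\to\omega$; and a surjective $f_{\delta,n,m,k}:2^{[j_{\delta,n,m}(k),\,j_{\delta,n,m}(k+1)-1]}\to2$; ordered by extension. For $\eta$ into $2$ with domain containing $\nu_{\delta,n,m}$, with $\zeta_i$ the $i$-th element of $\nu_{\delta,n,m}$, $g_{\delta,n,m,k}(\eta)=f_{\delta,n,m,k}((\eta(\zeta_i))_{j_{\delta,n,m}(k)\le i<j_{\delta,n,m}(k+1)})$. The set $R$: $R=\bigcup_{\delta<\omega_1}R_{\delta+\omega}$, where $p\in R_{\delta+\omega}$ consists of $\tilde p\in\tilde P$ with $\mathrm{ht}(\tilde p)=\delta+1$ and terms $\bar p=(p_{n,\alpha})_{n\in\omega,\alpha<\delta+\omega}$ such that $p_{n,\delta+m}=x_{n,m}$; for $\alpha<\delta$, $p_{n,\alpha}$ depends only on variables $x_{l,k}$ with $l<n$; and for all $n,m\in\omega$ and all limit $\alpha\le\delta$ there is $k_0$ such that for every assignment $a$, $p_{n,\alpha+m}\circ a=g_{\alpha,n,m,k}((p_{n+1,\zeta}\circ a)_{\zeta<\alpha})$ for all $k\ge k_0$ (computed from $\tilde p$). For $p\in R$, $\sigma(p)=(p_{n,m})_{n,m\in\omega}$. *)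

theory Defs
  imports Main
begin

text \<open>A term is represented
semantically, i.e. already modulo =^*: a map from assignments to bool which is
induced by a finite sequence of variables (v_0,...,v_{r-1}) and F : 2^r -> 2.\<close>

type_synonym assignment = "nat \<Rightarrow> nat \<Rightarrow> bool"
type_synonym trm = "assignment \<Rightarrow> bool"

definition term_of :: "(nat \<times> nat) list \<Rightarrow> (bool list \<Rightarrow> bool) \<Rightarrow> trm" where
  "term_of vs F = (\<lambda>a. F (map (\<lambda>(l, k). a l k) vs))"

definition is_term :: "trm \<Rightarrow> bool" where
  "is_term t \<longleftrightarrow> (\<exists>vs F. t = term_of vs F)"

definition var :: "nat \<Rightarrow> nat \<Rightarrow> trm" where
  "var l k = (\<lambda>a. a l k)"

definition zero_term :: trm where
  "zero_term = (\<lambda>a. False)"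

definition depends_only :: "trm \<Rightarrow> (nat \<times> nat) set \<Rightarrow> bool" where
  "depends_only t Y \<longleftrightarrow> (\<exists>vs F. set vs \<subseteq> Y \<and> t = term_of vs F)"

definition determined :: "trm \<Rightarrow> trm list \<Rightarrow> bool" where
  "determined s ts \<longleftrightarrow>
     (\<forall>a b. map (\<lambda>t. t a) ts = map (\<lambda>t. t b) ts \<longrightarrow> s a = s b)"

text \<open>Fin a b encodes omega*a + b, Top b encodes omega*omega + b.\<close>
datatype ord = Fin nat nat | Top nat

fun olt :: "ord \<Rightarrow> ord \<Rightarrow> bool" where
  "olt (Fin a b) (Fin c d) \<longleftrightarrow> a < c \<or> (a = c \<and> b < d)"
| "olt (Fin a b) (Top d) \<longleftrightarrow> True"
| "olt (Top b) (Fin c d) \<longleftrightarrow> False"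
| "olt (Top b) (Top d) \<longleftrightarrow> b < d"

fun is_limit :: "ord \<Rightarrow> bool" where
  "is_limit (Fin a b) \<longleftrightarrow> 0 < a \<and> b = 0"
| "is_limit (Top b) \<longleftrightarrow> b = 0"

fun oplus :: "ord \<Rightarrow> nat \<Rightarrow> ord" where
  "oplus (Fin a b) m = Fin a (b + m)"
| "oplus (Top b) m = Top (b + m)"

abbreviation delta :: ord where "delta \<equiv> Top 0"

text \<open>nu alpha n m is the increasing enumeration (zeta_i)_i of nu_{alpha,n,m};
j alpha n m is j_{alpha,n,m}; f alpha n m k is f_{alpha,n,m,k}, acting on
functions nat => bool of which only the values on [j(k), j(k+1)-1] matter.\<close>

definition cond_ok ::
  "ord \<Rightarrow> (ord \<Rightarrow> nat \<Rightarrow> nat \<Rightarrow> nat \<Rightarrow> ord) \<Rightarrow> (ord \<Rightarrow> nat \<Rightarrow> nat \<Rightarrow> nat \<Rightarrow> nat)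
    \<Rightarrow> (ord \<Rightarrow> nat \<Rightarrow> nat \<Rightarrow> nat \<Rightarrow> (nat \<Rightarrow> bool) \<Rightarrow> bool) \<Rightarrow> bool" where
  "cond_ok ht \<nu> j f \<longleftrightarrow>
    (\<forall>\<alpha>. is_limit \<alpha> \<and> olt \<alpha> ht \<longrightarrow>
      (\<forall>n m. (\<forall>i i'. i < i' \<longrightarrow> olt (\<nu> \<alpha> n m i) (\<nu> \<alpha> n m i'))
          \<and> (\<forall>i. olt (\<nu> \<alpha> n m i) \<alpha>)
          \<and> (\<forall>\<beta>. olt \<beta> \<alpha> \<longrightarrow> (\<exists>i. \<not> olt (\<nu> \<alpha> n m i) \<beta>))
          \<and> strict_mono (j \<alpha> n m)
          \<and> (\<forall>k. (\<forall>\<eta> \<eta>'. (\<forall>i. j \<alpha> n m k \<le> i \<and> i < j \<alpha> n m (Suc k) \<longrightarrow> \<eta> i = \<eta>' i)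
                     \<longrightarrow> f \<alpha> n m k \<eta> = f \<alpha> n m k \<eta>')
                 \<and> (\<exists>\<eta>. f \<alpha> n m k \<eta>) \<and> (\<exists>\<eta>. \<not> f \<alpha> n m k \<eta>)))
      \<and> (\<forall>n m1 m2. m1 \<noteq> m2 \<longrightarrow> range (\<nu> \<alpha> n m1) \<inter> range (\<nu> \<alpha> n m2) = {}))"

definition gfun ::
  "(ord \<Rightarrow> nat \<Rightarrow> nat \<Rightarrow> nat \<Rightarrow> ord)
    \<Rightarrow> (ord \<Rightarrow> nat \<Rightarrow> nat \<Rightarrow> nat \<Rightarrow> (nat \<Rightarrow> bool) \<Rightarrow> bool)
    \<Rightarrow> ord \<Rightarrow> nat \<Rightarrow> nat \<Rightarrow> nat \<Rightarrow> (ord \<Rightarrow> bool) \<Rightarrow> bool" where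
  "gfun \<nu> f \<alpha> n m k \<eta> = f \<alpha> n m k (\<lambda>i. \<eta> (\<nu> \<alpha> n m i))"

text \<open>(nu, j, f, P) is an element of R_{delta+omega} for delta = omega*omega:
the condition has height delta+1 and P n alpha = p_{n,alpha} for alpha < delta+omega
(every value of type ord is below delta+omega).\<close>
definition in_R_delta_omega ::
  "(ord \<Rightarrow> nat \<Rightarrow> nat \<Rightarrow> nat \<Rightarrow> ord) \<Rightarrow> (ord \<Rightarrow> nat \<Rightarrow> nat \<Rightarrow> nat \<Rightarrow> nat)
    \<Rightarrow> (ord \<Rightarrow> nat \<Rightarrow> nat \<Rightarrow> nat \<Rightarrow> (nat \<Rightarrow> bool) \<Rightarrow> bool)
    \<Rightarrow> (nat \<Rightarrow> ord \<Rightarrow> trm) \<Rightarrow> bool" where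
  "in_R_delta_omega \<nu> j f P \<longleftrightarrow>
     cond_ok (oplus delta 1) \<nu> j f
   \<and> (\<forall>n \<alpha>. is_term (P n \<alpha>))
   \<and> (\<forall>n m. P n (oplus delta m) = var n m)
   \<and> (\<forall>n \<alpha>. olt \<alpha> delta \<longrightarrow> depends_only (P n \<alpha>) {(l, k). l < n})
   \<and> (\<forall>n m \<alpha>. is_limit \<alpha> \<and> \<not> olt delta \<alpha> \<longrightarrow>
        (\<exists>k0. \<forall>a k. k0 \<le> k \<longrightarrow>
           P n (oplus \<alpha> m) a = gfun \<nu> f \<alpha> n m k (\<lambda>\<zeta>. P (Suc n) \<zeta> a)))"

end

theory Submission
  imports Defs "HOL-Library.Nat_Bijection" "HOL-Library.Infinite_Set"
begin



lemma tri_mono: "x \<le> y \<Longrightarrow> triangle x \<le> triangle y"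
  by (induction y) (auto simp: le_Suc_eq)

lemma pe_mono2: "b < b' \<Longrightarrow> prod_encode (a, b) < prod_encode (a, b')"
proof -
  assume "b < b'"
  then have "triangle (Suc (a + b)) \<le> triangle (a + b')" by (intro tri_mono) simp
  moreover have "prod_encode (a, b) = triangle (a + b) + a" "prod_encode (a, b') = triangle (a + b') + a"
    by (simp_all add: prod_encode_def)
  ultimately show ?thesis by simp
qed

lemma determined_map:
  "determined s (map p ms) \<longleftrightarrow> (\<forall>a b. (\<forall>x\<in>set ms. p x a = p x b) \<longrightarrow> s a = s b)"
  unfolding determined_def by (simp add: map_eq_conv)

lemma is_term_var: "is_term (var i j)"
  unfolding is_term_def term_of_def var_def
  by (rule exI[of _ "[(i,j)]"], rule exI[of _ hd]) simp

lemma is_term_zero: "is_term zero_term"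
  unfolding is_term_def term_of_def zero_term_def
  by (rule exI[of _ "[]"], rule exI[of _ "\<lambda>_. False"]) simp

lemma dep_var: "i < n \<Longrightarrow> depends_only (var i j) {(l, k). l < n}"
  unfolding depends_only_def term_of_def var_def
  by (rule exI[of _ "[(i,j)]"], rule exI[of _ hd]) simp

lemma dep_zero: "depends_only zero_term Y"
  unfolding depends_only_def term_of_def zero_term_def
  by (rule exI[of _ "[]"], rule exI[of _ "\<lambda>_. False"]) simp

lemma dep_term: "depends_only t Y \<Longrightarrow> is_term t"
  unfolding depends_only_def is_term_def by blast


locale Ctx =
  fixes p :: "nat \<Rightarrow> nat \<Rightarrow> trm"
  assumes dep: "\<forall>n m. depends_only (p n m) {(i, j). i < n}"
    and zeros: "\<forall>n. infinite {m. p n m = zero_term}"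
    and det: "\<forall>i j. infinite {n. \<forall>M. \<exists>ms. ms \<noteq> [] \<and> (\<forall>m\<in>set ms. M < m)
                              \<and> determined (var i j) (map (p n) ms)}"
begin

definition D :: "nat \<Rightarrow> nat \<Rightarrow> nat set" where
  "D i j = {n. \<forall>M. \<exists>ms. ms \<noteq> [] \<and> (\<forall>m\<in>set ms. M < m) \<and> determined (var i j) (map (p n) ms)}"

lemma D_inf: "infinite (D i j)"
  using det unfolding D_def by blast

definition ci :: "nat \<Rightarrow> nat" where "ci c = fst (prod_decode (c - 1))"
definition cj :: "nat \<Rightarrow> nat" where "cj c = snd (prod_decode (c - 1))"
definition valid :: "nat \<Rightarrow> nat \<Rightarrow> nat \<Rightarrow> bool" where
  "valid n a c \<longleftrightarrow> c \<noteq> 0 \<and> ci c < n \<and> n + a \<in> D (ci c) (cj c)"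
definition cof :: "nat \<Rightarrow> nat" where "cof m = fst (prod_decode m)"
definition content :: "nat \<Rightarrow> nat \<Rightarrow> nat \<Rightarrow> trm" where
  "content n a m = (if valid n a (cof m) then var (ci (cof m)) (cj (cof m)) else zero_term)"

fun qq :: "nat \<Rightarrow> ord \<Rightarrow> trm" where
  "qq n (Fin a m) = (if a = 0 then p n m else content n a m)"
| "qq n (Top m) = var n m"

definition A :: "nat \<Rightarrow> nat \<Rightarrow> nat \<Rightarrow> nat" where
  "A n m k = enumerate (D n m \<inter> {Suc (Suc n)..}) k - Suc n"
definition nuT :: "nat \<Rightarrow> nat \<Rightarrow> nat \<Rightarrow> ord" where
  "nuT n m k = Fin (A n m k) (prod_encode (Suc (prod_encode (n, m)), 0))"
definition nuA :: "nat \<Rightarrow> nat \<Rightarrow> nat \<Rightarrow> nat \<Rightarrow> ord" where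
  "nuA a n m k = Fin (a - 1) (prod_encode (if valid n a (cof m) then cof m else 0, prod_encode (m, k)))"

definition V :: "nat \<Rightarrow> nat \<Rightarrow> bool" where
  "V n t \<longleftrightarrow> valid n 1 (cof (fst (prod_decode t)))"
definition Good :: "nat \<Rightarrow> nat \<Rightarrow> nat list \<Rightarrow> bool" where
  "Good n t ms \<longleftrightarrow> ms \<noteq> [] \<and> sorted_wrt (<) ms \<and>
     (if V n t then determined (var (ci (cof (fst (prod_decode t)))) (cj (cof (fst (prod_decode t)))))
                      (map (p (Suc n)) ms)
      else (\<exists>z. ms = [z] \<and> p (Suc n) z = zero_term))"
definition pick :: "nat \<Rightarrow> nat \<Rightarrow> nat \<Rightarrow> nat list" where
  "pick n t M = (SOME ms. Good n t ms \<and> (\<forall>x\<in>set ms. M \<le> x))"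

primrec hi :: "nat \<Rightarrow> nat \<Rightarrow> nat" where
  "hi n 0 = 0"
| "hi n (Suc t) = Suc (Max (set (pick n t (hi n t))))"

definition BL :: "nat \<Rightarrow> nat \<Rightarrow> nat list" where "BL n t = pick n t (hi n t)"
definition LL :: "nat \<Rightarrow> nat \<Rightarrow> nat \<Rightarrow> nat list" where "LL n m k = BL n (prod_encode (m, k))"
definition jj :: "nat \<Rightarrow> nat \<Rightarrow> nat \<Rightarrow> nat" where "jj n m k = (\<Sum>k'<k. length (LL n m k'))"
definition bi :: "nat \<Rightarrow> nat \<Rightarrow> nat \<Rightarrow> nat" where "bi n m i = (LEAST k. i < jj n m (Suc k))"
definition g1 :: "nat \<Rightarrow> nat \<Rightarrow> nat \<Rightarrow> nat" where
  "g1 n m i = LL n m (bi n m i) ! (i - jj n m (bi n m i))"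
definition nu1 :: "nat \<Rightarrow> nat \<Rightarrow> nat \<Rightarrow> ord" where "nu1 n m i = Fin 0 (g1 n m i)"
definition f1 :: "nat \<Rightarrow> nat \<Rightarrow> nat \<Rightarrow> (nat \<Rightarrow> bool) \<Rightarrow> bool" where
  "f1 n m k \<eta> = (if valid n 1 (cof m) then
      (\<exists>a. (\<forall>i. jj n m k \<le> i \<and> i < jj n m (Suc k) \<longrightarrow> \<eta> i = p (Suc n) (LL n m k ! (i - jj n m k)) a)
           \<and> a (ci (cof m)) (cj (cof m)))
    else \<eta> (jj n m k))"

definition NU :: "ord \<Rightarrow> nat \<Rightarrow> nat \<Rightarrow> nat \<Rightarrow> ord" where
  "NU \<alpha> n m i = (case \<alpha> of Top _ \<Rightarrow> nuT n m i | Fin a _ \<Rightarrow> if a = 1 then nu1 n m i else nuA a n m i)"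
definition JJ :: "ord \<Rightarrow> nat \<Rightarrow> nat \<Rightarrow> nat \<Rightarrow> nat" where
  "JJ \<alpha> n m k = (case \<alpha> of Top _ \<Rightarrow> k | Fin a _ \<Rightarrow> if a = 1 then jj n m k else k)"
definition FF :: "ord \<Rightarrow> nat \<Rightarrow> nat \<Rightarrow> nat \<Rightarrow> (nat \<Rightarrow> bool) \<Rightarrow> bool" where
  "FF \<alpha> n m k \<eta> = (case \<alpha> of Top _ \<Rightarrow> \<eta> k | Fin a _ \<Rightarrow> if a = 1 then f1 n m k \<eta> else \<eta> k)"

lemma Good_ex: "\<exists>ms. Good n t ms \<and> (\<forall>x\<in>set ms. M \<le> x)"
proof (cases "V n t")
  case True
  define c where "c = cof (fst (prod_decode t))"
  have "valid n 1 c" using True unfolding V_def c_def by simp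
  then have "Suc n \<in> D (ci c) (cj c)" unfolding valid_def by simp
  then obtain ms where ms: "ms \<noteq> []" "\<forall>m\<in>set ms. M < m" "determined (var (ci c) (cj c)) (map (p (Suc n)) ms)"
    unfolding D_def by blast
  define ms' where "ms' = sorted_list_of_set (set ms)"
  have s: "set ms' = set ms" unfolding ms'_def by simp
  have "ms' \<noteq> []" using ms(1) s by auto
  moreover have "sorted_wrt (<) ms'" unfolding ms'_def by (simp add: strict_sorted_iff)
  moreover have "determined (var (ci c) (cj c)) (map (p (Suc n)) ms')"
    using ms(3) s by (simp add: determined_map)
  moreover have "\<forall>x\<in>set ms'. M \<le> x" using ms(2) s by auto
  ultimately show ?thesis using True unfolding Good_def c_def by auto
next
  case False
  have "infinite {m. p (Suc n) m = zero_term}" using zeros by blast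
  then obtain z where z: "M \<le> z" "p (Suc n) z = zero_term"
    unfolding infinite_nat_iff_unbounded_le by blast
  show ?thesis using False z by (intro exI[of _ "[z]"]) (simp add: Good_def)
qed

lemma pick_props: "Good n t (pick n t M)" "x \<in> set (pick n t M) \<Longrightarrow> M \<le> x"
  using someI_ex[OF Good_ex[of n t M]] unfolding pick_def by blast+

lemma BL_good: "Good n t (BL n t)"
  unfolding BL_def by (rule pick_props)

lemma BL_ne: "BL n t \<noteq> []"
  using BL_good unfolding Good_def by blast

lemma BL_lo: "x \<in> set (BL n t) \<Longrightarrow> hi n t \<le> x"
  unfolding BL_def by (rule pick_props)

lemma BL_hi: "x \<in> set (BL n t) \<Longrightarrow> x < hi n (Suc t)"
  unfolding BL_def by (simp add: le_imp_less_Suc)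

lemma hi_Suc: "hi n t \<le> hi n (Suc t)"
proof -
  obtain x where "x \<in> set (BL n t)" using BL_ne by (meson list.set_sel(1))
  then show ?thesis using BL_lo BL_hi by fastforce
qed

lemma hi_mono: "t \<le> t' \<Longrightarrow> hi n t \<le> hi n t'"
  using hi_Suc by (metis lift_Suc_mono_le)

lemma BL_lt: "t < t' \<Longrightarrow> x \<in> set (BL n t) \<Longrightarrow> y \<in> set (BL n t') \<Longrightarrow> x < y"
proof -
  assume a: "t < t'" "x \<in> set (BL n t)" "y \<in> set (BL n t')"
  have "x < hi n (Suc t)" using a BL_hi by blast
  also have "\<dots> \<le> hi n t'" using a by (intro hi_mono) simp
  also have "\<dots> \<le> y" using a BL_lo by blast
  finally show ?thesis .
qed

lemma LL_len: "0 < length (LL n m k)"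
  unfolding LL_def using BL_ne by simp

lemma jj_Suc: "jj n m (Suc k) = jj n m k + length (LL n m k)"
  unfolding jj_def by simp

lemma jj_smono: "strict_mono (jj n m)"
  using LL_len by (simp add: strict_mono_Suc_iff jj_Suc)

lemma jj_mono: "k \<le> k' \<Longrightarrow> jj n m k \<le> jj n m k'"
  using jj_smono by (simp add: strict_mono_less_eq)

lemma jj_ge: "k \<le> jj n m k"
  using jj_smono by (rule strict_mono_imp_increasing)

lemma bi_eq: "jj n m k \<le> i \<Longrightarrow> i < jj n m (Suc k) \<Longrightarrow> bi n m i = k"
  unfolding bi_def
proof (rule Least_equality)
  fix y assume a: "jj n m k \<le> i" "i < jj n m (Suc y)"
  show "k \<le> y"
  proof (rule ccontr)
    assume "\<not> k \<le> y"
    then have "jj n m (Suc y) \<le> jj n m k" by (intro jj_mono) simp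
    then show False using a by simp
  qed
qed

lemma bi_ex: "\<exists>k. jj n m k \<le> i \<and> i < jj n m (Suc k)"
proof -
  have ex: "\<exists>k. i < jj n m (Suc k)" using jj_ge[of "Suc i" n m] by (intro exI[of _ i]) simp
  define k where "k = (LEAST k. i < jj n m (Suc k))"
  have k1: "i < jj n m (Suc k)" unfolding k_def using LeastI_ex[OF ex] .
  have "jj n m k \<le> i"
  proof (cases k)
    case 0 then show ?thesis by (simp add: jj_def)
  next
    case (Suc k')
    then have "\<not> i < jj n m (Suc k')" using not_less_Least[of k' "\<lambda>k. i < jj n m (Suc k)"] k_def by simp
    then show ?thesis using Suc by simp
  qed
  then show ?thesis using k1 by blast
qed

lemma bi_bounds: "jj n m (bi n m i) \<le> i" "i < jj n m (Suc (bi n m i))"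
  using bi_ex[of n m i] bi_eq by auto

lemma bi_mono: "i \<le> i' \<Longrightarrow> bi n m i \<le> bi n m i'"
proof -
  assume "i \<le> i'"
  then have "i < jj n m (Suc (bi n m i'))" using bi_bounds(2)[of i' n m] by simp
  then show ?thesis unfolding bi_def[of n m i] by (rule Least_le)
qed

lemma g1_idx: "i - jj n m (bi n m i) < length (LL n m (bi n m i))"
  using bi_bounds(1)[of n m i] bi_bounds(2)[of i n m] jj_Suc[of n m "bi n m i"] by simp

lemma g1_in: "g1 n m i \<in> set (LL n m (bi n m i))"
  unfolding g1_def using g1_idx by simp

lemma g1_smono: "strict_mono (g1 n m)"
proof (rule strict_monoI)
  fix i i' :: nat assume "i < i'"
  then have le: "bi n m i \<le> bi n m i'" by (intro bi_mono) simp
  show "g1 n m i < g1 n m i'"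
  proof (cases "bi n m i = bi n m i'")
    case True
    have s: "sorted_wrt (<) (LL n m (bi n m i))" using BL_good unfolding LL_def Good_def by blast
    have "i - jj n m (bi n m i) < i' - jj n m (bi n m i)" using \<open>i < i'\<close> bi_bounds(1)[of n m i] by simp
    moreover have "i' - jj n m (bi n m i) < length (LL n m (bi n m i))" using g1_idx[of i' n m] True by simp
    ultimately show ?thesis unfolding g1_def using True sorted_wrt_nth_less[OF s] by metis
  next
    case False
    then have "bi n m i < bi n m i'" using le by simp
    then have "prod_encode (m, bi n m i) < prod_encode (m, bi n m i')" by (rule pe_mono2)
    then show ?thesis using g1_in[of n m i] g1_in[of n m i'] BL_lt unfolding LL_def by blast
  qed
qed

lemma g1_block: "jj n m k \<le> i \<Longrightarrow> i < jj n m (Suc k) \<Longrightarrow> g1 n m i = LL n m k ! (i - jj n m k)"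
  unfolding g1_def using bi_eq by simp

end

definition okA :: "ord \<Rightarrow> (ord \<Rightarrow> nat \<Rightarrow> nat \<Rightarrow> nat \<Rightarrow> ord) \<Rightarrow> (ord \<Rightarrow> nat \<Rightarrow> nat \<Rightarrow> nat \<Rightarrow> nat)
    \<Rightarrow> (ord \<Rightarrow> nat \<Rightarrow> nat \<Rightarrow> nat \<Rightarrow> (nat \<Rightarrow> bool) \<Rightarrow> bool) \<Rightarrow> bool" where
  "okA \<alpha> \<nu> j f \<longleftrightarrow>
      (\<forall>n m. (\<forall>i i'. i < i' \<longrightarrow> olt (\<nu> \<alpha> n m i) (\<nu> \<alpha> n m i'))
          \<and> (\<forall>i. olt (\<nu> \<alpha> n m i) \<alpha>)
          \<and> (\<forall>\<beta>. olt \<beta> \<alpha> \<longrightarrow> (\<exists>i. \<not> olt (\<nu> \<alpha> n m i) \<beta>))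
          \<and> strict_mono (j \<alpha> n m)
          \<and> (\<forall>k. (\<forall>\<eta> \<eta>'. (\<forall>i. j \<alpha> n m k \<le> i \<and> i < j \<alpha> n m (Suc k) \<longrightarrow> \<eta> i = \<eta>' i)
                     \<longrightarrow> f \<alpha> n m k \<eta> = f \<alpha> n m k \<eta>')
                 \<and> (\<exists>\<eta>. f \<alpha> n m k \<eta>) \<and> (\<exists>\<eta>. \<not> f \<alpha> n m k \<eta>)))
      \<and> (\<forall>n m1 m2. m1 \<noteq> m2 \<longrightarrow> range (\<nu> \<alpha> n m1) \<inter> range (\<nu> \<alpha> n m2) = {})"

lemma cond_ok_iff: "cond_ok ht \<nu> j f \<longleftrightarrow> (\<forall>\<alpha>. is_limit \<alpha> \<and> olt \<alpha> ht \<longrightarrow> okA \<alpha> \<nu> j f)"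
  unfolding cond_ok_def okA_def by blast

context Ctx
begin

lemma NU_simps[simp]: "NU (Top b) n m i = nuT n m i"
  "NU (Fin a b) n m i = (if a = 1 then nu1 n m i else nuA a n m i)"
  by (simp_all add: NU_def)
lemma JJ_simps[simp]: "JJ (Top b) n m k = k"
  "JJ (Fin a b) n m k = (if a = 1 then jj n m k else k)"
  by (simp_all add: JJ_def)
lemma FF_simps[simp]: "FF (Top b) n m k \<eta> = \<eta> k"
  "FF (Fin a b) n m k \<eta> = (if a = 1 then f1 n m k \<eta> else \<eta> k)"
  by (simp_all add: FF_def)

lemma cof_pe[simp]: "cof (prod_encode (c, x)) = c"
  unfolding cof_def by simp

lemma S_inf: "infinite (D n m \<inter> {Suc (Suc n)..})"
proof -
  have "D n m \<inter> {Suc (Suc n)..} = D n m - {..<Suc (Suc n)}" by auto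
  then show ?thesis using D_inf Diff_infinite_finite[OF finite_lessThan] by metis
qed

lemma A_props: "0 < A n m k" "Suc n + A n m k \<in> D n m"
proof -
  have e: "enumerate (D n m \<inter> {Suc (Suc n)..}) k \<in> D n m \<inter> {Suc (Suc n)..}"
    using enumerate_in_set[OF S_inf] .
  then show "0 < A n m k" "Suc n + A n m k \<in> D n m" unfolding A_def by auto
qed

lemma A_smono: "strict_mono (A n m)"
proof (rule strict_monoI)
  fix k k' :: nat assume "k < k'"
  have "enumerate (D n m \<inter> {Suc (Suc n)..}) k < enumerate (D n m \<inter> {Suc (Suc n)..}) k'"
    using enumerate_mono[OF \<open>k < k'\<close> S_inf] .
  moreover have "Suc (Suc n) \<le> enumerate (D n m \<inter> {Suc (Suc n)..}) k"
    using enumerate_in_set[OF S_inf, of n m k] by auto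
  ultimately show "A n m k < A n m k'" unfolding A_def by simp
qed

lemma ci_cj_pe[simp]: "ci (Suc (prod_encode (i, j))) = i" "cj (Suc (prod_encode (i, j))) = j"
  unfolding ci_def cj_def by simp_all

lemma qq_nuT: "qq (Suc n) (nuT n m k) = var n m"
proof -
  have "A n m k \<noteq> 0" using A_props(1) by simp
  moreover have "valid (Suc n) (A n m k) (Suc (prod_encode (n, m)))"
    unfolding valid_def using A_props(2) by simp
  ultimately show ?thesis unfolding nuT_def by (simp add: content_def)
qed

lemma ok_Top: "okA (Top 0) NU JJ FF"
  unfolding okA_def
proof (intro conjI allI impI)
  fix n m i i' :: nat assume "i < i'"
  then show "olt (NU (Top 0) n m i) (NU (Top 0) n m i')"
    using A_smono by (simp add: nuT_def strict_mono_def)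
next
  fix n m i show "olt (NU (Top 0) n m i) (Top 0)" by (simp add: nuT_def)
next
  fix n m :: nat and \<beta> assume "olt \<beta> (Top 0)"
  then obtain c d where b: "\<beta> = Fin c d" by (cases \<beta>) auto
  have "Suc c \<le> A n m (Suc c)" using A_smono by (rule strict_mono_imp_increasing)
  then show "\<exists>i. \<not> olt (NU (Top 0) n m i) \<beta>" using b
    by (intro exI[of _ "Suc c"]) (auto simp: nuT_def)
next
  fix n m show "strict_mono (JJ (Top 0) n m)" by (simp add: strict_mono_def)
next
  fix n m k :: nat and \<eta> \<eta>' :: "nat \<Rightarrow> bool"
  assume "\<forall>i. JJ (Top 0) n m k \<le> i \<and> i < JJ (Top 0) n m (Suc k) \<longrightarrow> \<eta> i = \<eta>' i"
  then show "FF (Top 0) n m k \<eta> = FF (Top 0) n m k \<eta>'" by simp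
next
  fix n m k show "\<exists>\<eta>. FF (Top 0) n m k \<eta>" by (intro exI[of _ "\<lambda>_. True"]) simp
next
  fix n m k show "\<exists>\<eta>. \<not> FF (Top 0) n m k \<eta>" by (intro exI[of _ "\<lambda>_. False"]) simp
next
  fix n m1 m2 :: nat assume "m1 \<noteq> m2"
  then show "range (NU (Top 0) n m1) \<inter> range (NU (Top 0) n m2) = {}"
    by (auto simp: nuT_def)
qed

lemma ok_A: assumes "2 \<le> a" shows "okA (Fin a 0) NU JJ FF"
  unfolding okA_def
proof (intro conjI allI impI)
  have a1: "a \<noteq> 1" using assms by simp
  {
  fix n m i i' :: nat assume "i < i'"
  then show "olt (NU (Fin a 0) n m i) (NU (Fin a 0) n m i')"
    using a1 pe_mono2[OF pe_mono2[OF \<open>i < i'\<close>]] by (simp add: nuA_def)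
  }
  {
  fix n m i show "olt (NU (Fin a 0) n m i) (Fin a 0)" using assms a1 by (simp add: nuA_def)
  }
  {
  fix n m :: nat and \<beta> assume "olt \<beta> (Fin a 0)"
  then obtain c d where b: "\<beta> = Fin c d" "c < a" by (cases \<beta>) auto
  let ?c = "if valid n a (cof m) then cof m else 0"
  have "d \<le> prod_encode (m, d)" by (rule le_prod_encode_2)
  also have "\<dots> \<le> prod_encode (?c, prod_encode (m, d))" by (rule le_prod_encode_2)
  finally have "d \<le> prod_encode (?c, prod_encode (m, d))" .
  then show "\<exists>i. \<not> olt (NU (Fin a 0) n m i) \<beta>" using b a1
    by (intro exI[of _ d]) (auto simp: nuA_def)
  }
  {
  fix n m show "strict_mono (JJ (Fin a 0) n m)" using a1 by (simp add: strict_mono_def)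
  }
  {
  fix n m k :: nat and \<eta> \<eta>' :: "nat \<Rightarrow> bool"
  assume "\<forall>i. JJ (Fin a 0) n m k \<le> i \<and> i < JJ (Fin a 0) n m (Suc k) \<longrightarrow> \<eta> i = \<eta>' i"
  then show "FF (Fin a 0) n m k \<eta> = FF (Fin a 0) n m k \<eta>'" using a1 by simp
  }
  {
  fix n m k show "\<exists>\<eta>. FF (Fin a 0) n m k \<eta>" using a1 by (intro exI[of _ "\<lambda>_. True"]) simp
  }
  {
  fix n m k show "\<exists>\<eta>. \<not> FF (Fin a 0) n m k \<eta>" using a1 by (intro exI[of _ "\<lambda>_. False"]) simp
  }
  {
  fix n m1 m2 :: nat assume "m1 \<noteq> m2"
  then show "range (NU (Fin a 0) n m1) \<inter> range (NU (Fin a 0) n m2) = {}"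
    using a1 by (auto simp: nuA_def)
  }
qed

lemma qq_nuA: assumes "2 \<le> a" shows "qq (Suc n) (nuA a n m k) = content n a m"
proof (cases "valid n a (cof m)")
  case True
  then have "valid (Suc n) (a - 1) (cof m)" using assms unfolding valid_def by auto
  then show ?thesis using True assms unfolding nuA_def by (simp add: content_def)
next
  case False
  have "\<not> valid (Suc n) (a - 1) 0" unfolding valid_def by simp
  then show ?thesis using False assms unfolding nuA_def by (simp add: content_def)
qed


lemma LL_det: "valid n 1 (cof m) \<Longrightarrow> determined (var (ci (cof m)) (cj (cof m))) (map (p (Suc n)) (LL n m k))"
  using BL_good[of n "prod_encode (m, k)"] unfolding LL_def Good_def V_def by (simp add: cof_def)

lemma LL_zero: "\<not> valid n 1 (cof m) \<Longrightarrow> \<exists>z. LL n m k = [z] \<and> p (Suc n) z = zero_term"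
  using BL_good[of n "prod_encode (m, k)"] unfolding LL_def Good_def V_def by (simp add: cof_def)

lemma block_all: assumes "\<forall>i. jj n m k \<le> i \<and> i < jj n m (Suc k) \<longrightarrow> P (LL n m k ! (i - jj n m k))"
  shows "\<forall>x\<in>set (LL n m k). P x"
proof
  fix x assume "x \<in> set (LL n m k)"
  then obtain r where r: "r < length (LL n m k)" "x = LL n m k ! r" by (auto simp: in_set_conv_nth)
  have "jj n m k \<le> jj n m k + r" "jj n m k + r < jj n m (Suc k)" using r(1) jj_Suc[of n m k] by simp_all
  then have "P (LL n m k ! (jj n m k + r - jj n m k))" using assms by blast
  then show "P x" using r by simp
qed

lemma f1_valid:
  assumes v: "valid n 1 (cof m)"
    and h: "\<forall>i. jj n m k \<le> i \<and> i < jj n m (Suc k) \<longrightarrow> \<eta> i = p (Suc n) (LL n m k ! (i - jj n m k)) b"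
  shows "f1 n m k \<eta> = b (ci (cof m)) (cj (cof m))"
proof
  assume "f1 n m k \<eta>"
  then obtain a where a: "\<forall>i. jj n m k \<le> i \<and> i < jj n m (Suc k) \<longrightarrow> \<eta> i = p (Suc n) (LL n m k ! (i - jj n m k)) a"
    "a (ci (cof m)) (cj (cof m))" using v unfolding f1_def by auto
  have "\<forall>i. jj n m k \<le> i \<and> i < jj n m (Suc k) \<longrightarrow> (\<lambda>x. p (Suc n) x a = p (Suc n) x b) (LL n m k ! (i - jj n m k))"
    using a(1) h by simp
  then have "\<forall>x\<in>set (LL n m k). p (Suc n) x a = p (Suc n) x b" by (rule block_all)
  then have "var (ci (cof m)) (cj (cof m)) a = var (ci (cof m)) (cj (cof m)) b"
    using LL_det[OF v, of k] unfolding determined_map by blast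
  then show "b (ci (cof m)) (cj (cof m))" using a(2) by (simp add: var_def)
next
  assume "b (ci (cof m)) (cj (cof m))"
  then show "f1 n m k \<eta>" unfolding f1_def if_P[OF v] using h by (intro exI[of _ b]) simp
qed

lemma ok_1: "okA (Fin 1 0) NU JJ FF"
  unfolding okA_def
proof (intro conjI allI impI)
  fix n m i i' :: nat assume "i < i'"
  then show "olt (NU (Fin 1 0) n m i) (NU (Fin 1 0) n m i')"
    using g1_smono by (simp add: nu1_def strict_mono_def)
next
  fix n m i show "olt (NU (Fin 1 0) n m i) (Fin 1 0)" by (simp add: nu1_def)
next
  fix n m :: nat and \<beta> assume "olt \<beta> (Fin 1 0)"
  then obtain d where b: "\<beta> = Fin 0 d" by (cases \<beta>) auto
  have "d \<le> g1 n m d" using g1_smono by (rule strict_mono_imp_increasing)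
  then show "\<exists>i. \<not> olt (NU (Fin 1 0) n m i) \<beta>" using b
    by (intro exI[of _ d]) (auto simp: nu1_def)
next
  fix n m have "JJ (Fin 1 0) n m = jj n m" by (rule ext) simp
  then show "strict_mono (JJ (Fin 1 0) n m)" using jj_smono by simp
next
  fix n m k :: nat and \<eta> \<eta>' :: "nat \<Rightarrow> bool"
  assume h: "\<forall>i. JJ (Fin 1 0) n m k \<le> i \<and> i < JJ (Fin 1 0) n m (Suc k) \<longrightarrow> \<eta> i = \<eta>' i"
  then have h': "\<forall>i. jj n m k \<le> i \<and> i < jj n m (Suc k) \<longrightarrow> \<eta> i = \<eta>' i" by simp
  have "jj n m k < jj n m (Suc k)" using jj_smono by (simp add: strict_mono_def)
  then have "f1 n m k \<eta> = f1 n m k \<eta>'"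
  proof -
    have e: "\<And>a. (\<forall>i. jj n m k \<le> i \<and> i < jj n m (Suc k) \<longrightarrow> \<eta> i = p (Suc n) (LL n m k ! (i - jj n m k)) a)
      \<longleftrightarrow> (\<forall>i. jj n m k \<le> i \<and> i < jj n m (Suc k) \<longrightarrow> \<eta>' i = p (Suc n) (LL n m k ! (i - jj n m k)) a)"
      using h' by auto
    have "\<eta> (jj n m k) = \<eta>' (jj n m k)" using h' \<open>jj n m k < jj n m (Suc k)\<close> by simp
    then show ?thesis unfolding f1_def using e by simp
  qed
  then show "FF (Fin 1 0) n m k \<eta> = FF (Fin 1 0) n m k \<eta>'" by simp
next
  fix n m k
  show "\<exists>\<eta>. FF (Fin 1 0) n m k \<eta>"
  proof (cases "valid n 1 (cof m)")
    case True
    have "f1 n m k (\<lambda>i. p (Suc n) (LL n m k ! (i - jj n m k)) (\<lambda>_ _. True))"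
      by (rule f1_valid[OF True, THEN iffD2]) simp_all
    then show ?thesis by auto
  next
    case False
    then show ?thesis by (intro exI[of _ "\<lambda>_. True"]) (simp add: f1_def)
  qed
next
  fix n m k
  show "\<exists>\<eta>. \<not> FF (Fin 1 0) n m k \<eta>"
  proof (cases "valid n 1 (cof m)")
    case True
    have "\<not> f1 n m k (\<lambda>i. p (Suc n) (LL n m k ! (i - jj n m k)) (\<lambda>_ _. False))"
      using f1_valid[OF True, of k "\<lambda>i. p (Suc n) (LL n m k ! (i - jj n m k)) (\<lambda>_ _. False)" "\<lambda>_ _. False"]
      by simp
    then show ?thesis by auto
  next
    case False
    then show ?thesis by (intro exI[of _ "\<lambda>_. False"]) (simp add: f1_def)
  qed
next
  fix n m1 m2 :: nat assume "m1 \<noteq> m2"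
  show "range (NU (Fin 1 0) n m1) \<inter> range (NU (Fin 1 0) n m2) = {}"
  proof (rule ccontr)
    assume "range (NU (Fin 1 0) n m1) \<inter> range (NU (Fin 1 0) n m2) \<noteq> {}"
    then obtain i i' where e: "g1 n m1 i = g1 n m2 i'" by (auto simp: nu1_def)
    have ne: "prod_encode (m1, bi n m1 i) \<noteq> prod_encode (m2, bi n m2 i')" using \<open>m1 \<noteq> m2\<close> by simp
    have x: "g1 n m1 i \<in> set (BL n (prod_encode (m1, bi n m1 i)))" using g1_in[of n m1 i] by (simp add: LL_def)
    have y: "g1 n m2 i' \<in> set (BL n (prod_encode (m2, bi n m2 i')))" using g1_in[of n m2 i'] by (simp add: LL_def)
    show False using ne BL_lt[OF _ x y] BL_lt[OF _ y x] e by (metis less_irrefl nat_neq_iff)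
  qed
qed

lemma eq_1: "qq n (Fin 1 m) a = f1 n m k (\<lambda>i. qq (Suc n) (nu1 n m i) a)"
proof (cases "valid n 1 (cof m)")
  case True
  have "\<forall>i. jj n m k \<le> i \<and> i < jj n m (Suc k) \<longrightarrow>
      qq (Suc n) (nu1 n m i) a = p (Suc n) (LL n m k ! (i - jj n m k)) a"
    by (auto simp: nu1_def g1_block)
  from f1_valid[OF True this] show ?thesis using True by (simp add: content_def var_def)
next
  case False
  obtain z where z: "LL n m k = [z]" "p (Suc n) z = zero_term" using LL_zero[OF False] by blast
  have "jj n m k < jj n m (Suc k)" using jj_smono by (simp add: strict_mono_def)
  then have "g1 n m (jj n m k) = z" using g1_block[of n m k "jj n m k"] z by simp
  then show ?thesis using False z by (simp add: f1_def nu1_def content_def zero_term_def)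
qed

lemma eqn: "is_limit \<alpha> \<Longrightarrow> \<not> olt (Top 0) \<alpha> \<Longrightarrow>
   \<exists>k0. \<forall>a k. k0 \<le> k \<longrightarrow> qq n (oplus \<alpha> m) a = gfun NU FF \<alpha> n m k (\<lambda>\<zeta>. qq (Suc n) \<zeta> a)"
proof (cases \<alpha>)
  case (Fin c d)
  assume "is_limit \<alpha>"
  then have cd: "d = 0" "0 < c" using Fin by auto
  show ?thesis
  proof (cases "c = 1")
    case True
    then show ?thesis using Fin cd eq_1 by (simp add: gfun_def)
  next
    case False
    then have "2 \<le> c" using cd by simp
    then show ?thesis using Fin cd False qq_nuA[OF \<open>2 \<le> c\<close>] by (simp add: gfun_def)
  qed
next
  case (Top d)
  assume "is_limit \<alpha>"
  then show ?thesis using Top qq_nuT by (simp add: gfun_def var_def)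
qed

lemma main: "in_R_delta_omega NU JJ FF qq \<and> (\<forall>n m. qq n (Fin 0 m) = p n m)"
  unfolding in_R_delta_omega_def
proof (intro conjI allI impI)
  show "cond_ok (oplus delta 1) NU JJ FF"
    unfolding cond_ok_iff
  proof (intro allI impI)
    fix \<alpha> assume h: "is_limit \<alpha> \<and> olt \<alpha> (oplus delta 1)"
    show "okA \<alpha> NU JJ FF"
    proof (cases \<alpha>)
      case (Fin c d)
      then have cd: "d = 0" "0 < c" using h by auto
      show ?thesis
      proof (cases "c = 1")
        case True then show ?thesis using Fin cd ok_1 by simp
      next
        case False then have "2 \<le> c" using cd by simp
        then show ?thesis using Fin cd ok_A by simp
      qed
    next
      case (Top d)
      then show ?thesis using h ok_Top by simp
    qed
  qed
next
  fix n \<alpha> show "is_term (qq n \<alpha>)"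
  proof (cases \<alpha>)
    case (Fin c d)
    then show ?thesis using dep dep_term is_term_var is_term_zero by (auto simp: content_def)
  next
    case (Top d) then show ?thesis using is_term_var by simp
  qed
next
  fix n m show "qq n (oplus delta m) = var n m" by simp
next
  fix n \<alpha> assume "olt \<alpha> delta"
  then obtain c d where a: "\<alpha> = Fin c d" by (cases \<alpha>) auto
  show "depends_only (qq n \<alpha>) {(l, k). l < n}"
    using a dep dep_var dep_zero by (auto simp: content_def valid_def)
next
  fix n m \<alpha> assume "is_limit \<alpha> \<and> \<not> olt delta \<alpha>"
  then show "\<exists>k0. \<forall>a k. k0 \<le> k \<longrightarrow> qq n (oplus \<alpha> m) a = gfun NU FF \<alpha> n m k (\<lambda>\<zeta>. qq (Suc n) \<zeta> a)"
    using eqn by blast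
next
  fix n m show "qq n (Fin 0 m) = p n m" by simp
qed

end

theorem mainTheorem16:
  fixes p :: "nat \<Rightarrow> nat \<Rightarrow> trm"
  assumes dep: "\<forall>n m. depends_only (p n m) {(i, j). i < n}"
    and zeros: "\<forall>n. infinite {m. p n m = zero_term}"
    and det: "\<forall>i j. infinite {n. \<forall>M. \<exists>ms. ms \<noteq> [] \<and> (\<forall>m\<in>set ms. M < m)
                              \<and> determined (var i j) (map (p n) ms)}"
  shows "\<exists>\<nu> j f q. in_R_delta_omega \<nu> j f q \<and> (\<forall>n m. q n (Fin 0 m) = p n m)"
proof -
  interpret Ctx p using assms by unfold_locales
  show ?thesis using main by blast
qed

end
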